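(* Let $I\subseteq\mathbb{R}$ be an interval and let $f:I\to\mathbb{R}$ be convex on $I^{\circ}$, the interior of $I$. Let $a,b\in I^{\circ}$ with $a<b$, and suppose $f'\in L[a,b]$. If $f(a)f(b)>0$ and $\int_a^b f(t)\,dt=0$, then $$f(a)f(b)\le \frac{b-a}{12}\int_a^b f'(x)^2\,dx .$$ Moreover, the constant $\frac{b-a}{12}$ is best possible: it cannot be replaced by a smaller constant such that the inequality remains valid for all functions satisfying the hypotheses.
   Context: $L[a,b]$ denotes the space of Lebesgue integrable functions on $[a,b]$. A convex function on an open interval is differentiable almost everywhere, so $f'$ is defined a.e. on $[a,b]$. *)

theory Defs
  imports "HOL-Analysis.Analysis"
begin

definition thm3_hyps ::
  "real set \<Rightarrow> (real \<Rightarrow> real) \<Rightarrow> (real \<Rightarrow> real) \<Rightarrow> real \<Rightarrow> real \<Rightarrow> bool" where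
  "thm3_hyps I f f' a b \<longleftrightarrow>
     is_interval I \<and> convex_on (interior I) f \<and>
     a \<in> interior I \<and> b \<in> interior I \<and> a < b \<and>
     (AE x in lborel. x \<in> {a..b} \<longrightarrow> (f has_real_derivative f' x) (at x)) \<and>
     set_integrable lborel {a..b} f' \<and>
     f a * f b > 0 \<and>
     (LINT t:{a..b}|lborel. f t) = 0"

end

theory Submission
  imports Defs "HOL-Real_Asymp.Real_Asymp"
begin
lemma lint_ftc:
  fixes F g :: "real \<Rightarrow> real"
  assumes "a \<le> b" "\<And>x. x \<in> {a..b} \<Longrightarrow> (F has_real_derivative g x) (at x within {a..b})"
    "continuous_on {a..b} g"
  shows "(LINT x:{a..b}|lborel. g x) = F b - F a"
proof -
  have si: "set_integrable lborel {a..b} g"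
    unfolding set_integrable_def by (rule borel_integrable_compact) (auto simp: assms)
  have "(g has_integral (F b - F a)) {a..b}"
    by (rule fundamental_theorem_of_calculus)
      (use assms in \<open>auto simp: has_real_derivative_iff_has_vector_derivative\<close>)
  then show ?thesis using set_borel_integral_eq_integral(2)[OF si] integral_unique by metis
qed

lemma slope_mono:
  fixes f :: "real \<Rightarrow> real"
  assumes f: "convex_on J f" and J: "p \<in> J" "q \<in> J" "p' \<in> J" "q' \<in> J"
    and o: "p < q" "p' < q'" "p \<le> p'" "q \<le> q'"
  shows "(f q - f p)/(q-p) \<le> (f q' - f p')/(q' - p')"
proof -
  have 1: "(f q - f p)/(q-p) \<le> (f q' - f p)/(q' - p)"
  proof (cases "q = q'")
    case False
    then have "p < q" "q < q'" using o by auto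
    from convex_on_slope_le(1)[OF f J(1) J(4) this] show ?thesis
      by (smt (verit, ccfv_threshold) minus_divide_divide)
  qed simp
  have 2: "(f q' - f p)/(q' - p) \<le> (f q' - f p')/(q' - p')"
  proof (cases "p = p'")
    case False
    then have "p < p'" "p' < q'" using o by auto
    from convex_on_slope_le(2)[OF f J(1) J(4) this] show ?thesis
      by (smt (verit, ccfv_threshold) minus_divide_divide)
  qed simp
  from 1 2 show ?thesis by linarith
qed

lemma deriv_seq:
  fixes \<phi> :: "real \<Rightarrow> real"
  assumes "(\<phi> has_real_derivative D) (at c)" "h \<longlonglongrightarrow> 0" "\<And>n. h n \<noteq> 0"
  shows "(\<lambda>n. (\<phi> (c + h n) - \<phi> c) / h n) \<longlonglongrightarrow> D"
proof -
  have "((\<lambda>k. (\<phi> (c + k) - \<phi> c) / k) \<longlongrightarrow> D) (at 0)"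
    using assms(1) by (simp add: DERIV_def)
  moreover have "filterlim h (at 0) sequentially"
    using assms(2,3) by (simp add: filterlim_at)
  ultimately show ?thesis by (rule filterlim_compose)
qed

lemma part2:
  fixes a b :: real
  assumes "a < b" "C < (b - a) / 12"
  shows "\<exists>I f f'. thm3_hyps I f f' a b \<and>
               \<not> (f a * f b \<le> C * (LINT x:{a..b}|lborel. (f' x)\<^sup>2))"
proof -
  define m where "m = (a+b)/2"
  define L where "L = b - a"
  have L: "L > 0" using assms unfolding L_def by simp
  define f where "f x = (x-m)^2 - L^2/12" for x :: real
  define f' where "f' x = 2*(x-m)" for x :: real
  have der: "(f has_real_derivative f' x) (at x)" for x
    unfolding f_def[abs_def] f'_def by (auto intro!: derivative_eq_intros)
  have cvx: "convex_on UNIV f"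
    using der by (intro convex_on_realI[where f'=f']) (auto simp: f'_def)
  have fa: "f a = L^2/6" "f b = L^2/6" unfolding f_def m_def L_def by (simp_all add: field_simps power2_eq_square)
  have int0: "(LINT t:{a..b}|lborel. f t) = 0"
  proof -
    have "(LINT t:{a..b}|lborel. f t) = ((b-m)^3/3 - L^2/12*b) - ((a-m)^3/3 - L^2/12*a)"
      by (rule lint_ftc[where F="\<lambda>x. (x-m)^3/3 - L^2/12*x"]) 
         (use assms in \<open>auto intro!: derivative_eq_intros continuous_intros simp: f_def power2_eq_square
             simp del: power_Suc\<close>)
    also have "\<dots> = 0" unfolding m_def L_def by (simp add: field_simps power3_eq_cube power2_eq_square)
    finally show ?thesis .
  qed
  have int2: "(LINT x:{a..b}|lborel. (f' x)\<^sup>2) = L^3/3"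
  proof -
    have "(LINT x:{a..b}|lborel. (f' x)\<^sup>2) = (4*(b-m)^3/3) - (4*(a-m)^3/3)"
      by (rule lint_ftc[where F="\<lambda>x. 4*(x-m)^3/3"]) 
         (use assms in \<open>auto intro!: derivative_eq_intros continuous_intros simp: f'_def power2_eq_square field_simps
             simp del: power_Suc\<close>)
    also have "\<dots> = L^3/3" unfolding m_def L_def by (simp add: field_simps power3_eq_cube)
    finally show ?thesis .
  qed
  have si: "set_integrable lborel {a..b} f'"
    unfolding set_integrable_def by (rule borel_integrable_compact) (auto simp: f'_def intro!: continuous_intros)
  have hyp: "thm3_hyps UNIV f f' a b"
    unfolding thm3_hyps_def using assms cvx der si int0 L by (auto simp: fa)
  have "C * (L^3/3) < (L/12) * (L^3/3)" using assms L unfolding L_def by (intro mult_strict_right_mono) auto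
  also have "\<dots> = f a * f b" unfolding fa by (simp add: field_simps power2_eq_square power3_eq_cube)
  finally have "\<not> (f a * f b \<le> C * (LINT x:{a..b}|lborel. (f' x)\<^sup>2))" unfolding int2 by simp
  with hyp show ?thesis by blast
qed

lemma part1:
  assumes H: "thm3_hyps I f f' a b"
  shows "f a * f b \<le> (b - a) / 12 * (LINT x:{a..b}|lborel. (f' x)\<^sup>2)"
proof -
  define J where "J = interior I"
  have hyps: "is_interval I" "convex_on J f" "a \<in> J" "b \<in> J" "a < b"
    "AE x in lborel. x \<in> {a..b} \<longrightarrow> (f has_real_derivative f' x) (at x)"
    "set_integrable lborel {a..b} f'" "(LINT t:{a..b}|lborel. f t) = 0"
    using H unfolding thm3_hyps_def J_def by auto
  have oJ: "open J" unfolding J_def by simp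
  have cJ: "convex J" unfolding J_def using hyps(1) by (simp add: convex_interior is_interval_convex)
  obtain e1 where e1: "e1 > 0" "ball a e1 \<subseteq> J" using oJ hyps(3) openE by blast
  obtain e2 where e2: "e2 > 0" "ball b e2 \<subseteq> J" using oJ hyps(4) openE by blast
  define \<delta> where "\<delta> = min e1 e2 / 2"
  have d0: "\<delta> > 0" using e1 e2 unfolding \<delta>_def by simp
  have "a - \<delta> \<in> ball a e1" "b + \<delta> \<in> ball b e2" using e1 e2 unfolding \<delta>_def by (auto simp: dist_real_def)
  then have "a - \<delta> \<in> J" "b + \<delta> \<in> J" using e1 e2 by auto
  then have IJ: "{a-\<delta>..b+\<delta>} \<subseteq> J"
    using atMostAtLeast_subset_convex[OF cJ] hyps(5) d0 by simp
  have contf: "continuous_on J f" by (rule convex_on_continuous[OF oJ hyps(2)])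
  have contI: "continuous_on {a-\<delta>..b+\<delta>} f" using contf IJ continuous_on_subset by blast
  define m where "m = (a+b)/2"
  define L where "L = b - a"
  have L0: "L > 0" using hyps(5) unfolding L_def by simp
  define h :: "nat \<Rightarrow> real" where "h n = \<delta> / (real n + 2)" for n
  have h0: "h n > 0" "h n \<le> \<delta>/2" for n
    using d0 unfolding h_def by (auto simp: field_simps)
  have hlim: "h \<longlonglongrightarrow> 0"
    unfolding h_def by real_asymp
  define Q where "Q n x = (f (x + h n) - f x) / h n" for n x
  define K1 where "K1 = (f a - f (a-\<delta>)) / (a - (a-\<delta>))"
  define K2 where "K2 = (f (b+\<delta>) - f (b+\<delta>/2)) / ((b+\<delta>) - (b+\<delta>/2))"
  define K where "K = \<bar>K1\<bar> + \<bar>K2\<bar>"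
  have K0: "K \<ge> 0" unfolding K_def by simp
  have Qb: "\<bar>Q n x\<bar> \<le> K" if x: "x \<in> {a..b}" for n x
  proof -
    have mem: "p \<in> J" if "a - \<delta> \<le> p" "p \<le> b + \<delta>" for p using IJ that by auto
    have "K1 \<le> Q n x" unfolding K1_def Q_def
      using slope_mono[OF hyps(2), of "a-\<delta>" a x "x + h n"] x h0[of n] d0 mem by auto
    moreover have "Q n x \<le> K2" unfolding K2_def Q_def
      using slope_mono[OF hyps(2), of x "x + h n" "b+\<delta>/2" "b+\<delta>"] x h0[of n] d0 mem by auto
    ultimately show ?thesis unfolding K_def by linarith
  qed

  have memJ: "x + h n \<in> {a-\<delta><..<b+\<delta>}" "x \<in> {a-\<delta><..<b+\<delta>}" if "x \<in> {a..b}" for x n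
    using that h0[of n] d0 by auto
  define F where "F u = integral {a-\<delta>..u} f" for u
  define g where "g u = f u * (u - m)" for u
  define G where "G u = integral {a-\<delta>..u} g" for u
  have contg: "continuous_on {a-\<delta>..b+\<delta>} g"
    unfolding g_def by (intro continuous_intros contI)
  have dF: "(F has_real_derivative f u) (at u)" if "u \<in> {a-\<delta><..<b+\<delta>}" for u
  proof -
    have int: "u \<in> interior {a-\<delta>..b+\<delta>}" using that by simp
    have "u \<in> {a-\<delta>..b+\<delta>}" using that by simp
    from integral_has_vector_derivative[OF contI this]
    have "((\<lambda>u. integral {a-\<delta>..u} f) has_vector_derivative f u) (at u)"
      unfolding at_within_interior[OF int] .
    then show ?thesis
      unfolding F_def[abs_def] has_real_derivative_iff_has_vector_derivative .
  qed
  have dG: "(G has_real_derivative g u) (at u)" if "u \<in> {a-\<delta><..<b+\<delta>}" for u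
  proof -
    have int: "u \<in> interior {a-\<delta>..b+\<delta>}" using that by simp
    have "u \<in> {a-\<delta>..b+\<delta>}" using that by simp
    from integral_has_vector_derivative[OF contg this]
    have "((\<lambda>u. integral {a-\<delta>..u} g) has_vector_derivative g u) (at u)"
      unfolding at_within_interior[OF int] .
    then show ?thesis
      unfolding G_def[abs_def] has_real_derivative_iff_has_vector_derivative .
  qed
  define P where "P n x = (G (x + h n) - G x) / h n - F (x + h n)" for n x
  have dP: "(P n has_real_derivative Q n x * (x - m)) (at x)" if x: "x \<in> {a..b}" for n x
  proof -
    have 1: "((\<lambda>x. G (x + h n)) has_real_derivative g (x + h n)) (at x)"
      using dG[OF memJ(1)[OF x]] by (simp add: DERIV_shift)
    have 2: "((\<lambda>x. F (x + h n)) has_real_derivative f (x + h n)) (at x)"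
      using dF[OF memJ(1)[OF x]] by (simp add: DERIV_shift)
    have "(P n has_real_derivative ((g (x + h n) - g x) / h n - f (x + h n))) (at x)"
      unfolding P_def[abs_def]
      by (intro DERIV_diff DERIV_cdivide 1 2 dG memJ(2)[OF x])
    moreover have "(g (x + h n) - g x) / h n - f (x + h n) = Q n x * (x - m)"
      using h0[of n] unfolding g_def Q_def by (simp add: field_simps)
    ultimately show ?thesis by simp
  qed
  have cQ: "continuous_on {a..b} (\<lambda>x. Q n x * (x - m))" for n
  proof -
    have "continuous_on {a..b} (\<lambda>x. f (x + h n))"
      by (rule continuous_on_compose2[OF contI]) (use h0[of n] d0 in \<open>auto intro!: continuous_intros\<close>)
    moreover have "continuous_on {a..b} f" by (rule continuous_on_subset[OF contI]) (use d0 in auto)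
    ultimately show ?thesis unfolding Q_def by (intro continuous_intros) (use h0[of n] in auto)
  qed
  have intQ: "(LINT x:{a..b}|lborel. Q n x * (x - m)) = P n b - P n a" for n
  proof (rule lint_ftc[OF _ _ cQ])
    show "a \<le> b" using hyps(5) by simp
    show "(P n has_real_derivative Q n x * (x - m)) (at x within {a..b})" if "x \<in> {a..b}" for x
      by (rule has_field_derivative_at_within[OF dP[OF that]])
  qed
  have intF: "(LINT x:{a..b}|lborel. f x) = F b - F a"
  proof (rule lint_ftc)
    show "a \<le> b" using hyps(5) by simp
    show "(F has_real_derivative f x) (at x within {a..b})" if "x \<in> {a..b}" for x
      by (rule has_field_derivative_at_within[OF dF[OF memJ(2)[OF that]]])
    show "continuous_on {a..b} f" by (rule continuous_on_subset[OF contI]) (use d0 in auto)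
  qed
  have bJ: "b \<in> {a-\<delta><..<b+\<delta>}" "a \<in> {a-\<delta><..<b+\<delta>}" using d0 hyps(5) by auto
  have hne: "h n \<noteq> 0" for n using h0[of n] by simp
  have limP: "(\<lambda>n. P n b - P n a) \<longlonglongrightarrow> (g b - F b) - (g a - F a)"
  proof -
    have Fl: "(\<lambda>n. F (c + h n)) \<longlonglongrightarrow> F c" if "c \<in> {a-\<delta><..<b+\<delta>}" for c
    proof -
      have "isCont F c" using dF[OF that] by (rule DERIV_isCont)
      moreover have "(\<lambda>n. c + h n) \<longlonglongrightarrow> c" using tendsto_add[OF tendsto_const hlim, of c] by simp
      ultimately show ?thesis by (rule isCont_tendsto_compose)
    qed
    have "(\<lambda>n. P n c) \<longlonglongrightarrow> g c - F c" if "c \<in> {a-\<delta><..<b+\<delta>}" for c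
      unfolding P_def by (intro tendsto_diff deriv_seq[OF dG[OF that] hlim hne] Fl that)
    from tendsto_diff[OF this[OF bJ(1)] this[OF bJ(2)]] show ?thesis .
  qed
  have f'meas: "(\<lambda>x. indicator {a..b} x *\<^sub>R f' x) \<in> borel_measurable lborel"
    using hyps(7) unfolding set_integrable_def by auto
  have AElim: "AE x in lborel. x \<in> {a..b} \<longrightarrow> (\<lambda>n. Q n x) \<longlonglongrightarrow> f' x"
    using hyps(6) by eventually_elim (auto simp: Q_def intro: deriv_seq[OF _ hlim hne])
  have wint: "integrable lborel (\<lambda>x. indicator {a..b} x *\<^sub>R (c::real))" for c
    by (rule borel_integrable_compact) auto
  have smeas: "(\<lambda>x. indicator {a..b} x *\<^sub>R (Q n x * (x - m))) \<in> borel_measurable lborel" for n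
    using borel_measurable_continuous_on_indicator[OF _ cQ[of n]] by simp
  have smeas2: "(\<lambda>x. indicator {a..b} x *\<^sub>R (Q n x)\<^sup>2) \<in> borel_measurable lborel" for n
  proof -
    have "continuous_on {a..b} (\<lambda>x. Q n x)"
    proof -
      have "continuous_on {a..b} (\<lambda>x. f (x + h n))"
        by (rule continuous_on_compose2[OF contI]) (use h0[of n] d0 in \<open>auto intro!: continuous_intros\<close>)
      moreover have "continuous_on {a..b} f" by (rule continuous_on_subset[OF contI]) (use d0 in auto)
      ultimately show ?thesis unfolding Q_def by (intro continuous_intros) (use h0[of n] in auto)
    qed
    then have "continuous_on {a..b} (\<lambda>x. (Q n x)\<^sup>2)" by (intro continuous_intros)
    from borel_measurable_continuous_on_indicator[OF _ this] show ?thesis by simp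
  qed
  have lmeas: "(\<lambda>x. indicator {a..b} x *\<^sub>R (f' x * (x - m))) \<in> borel_measurable lborel"
  proof -
    have "(\<lambda>x. (indicator {a..b} x *\<^sub>R f' x) * (x - m)) \<in> borel_measurable lborel"
      using f'meas by measurable
    then show ?thesis by (simp add: mult.assoc)
  qed
  have lmeas2: "(\<lambda>x. indicator {a..b} x *\<^sub>R (f' x)\<^sup>2) \<in> borel_measurable lborel"
  proof -
    have "(\<lambda>x. (indicator {a..b} x *\<^sub>R f' x)\<^sup>2) \<in> borel_measurable lborel"
      using f'meas by measurable
    moreover have "(\<lambda>x. (indicator {a..b} x *\<^sub>R f' x)\<^sup>2) = (\<lambda>x. indicator {a..b} x *\<^sub>R (f' x)\<^sup>2)"
      by (auto simp: indicator_def fun_eq_iff)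
    ultimately show ?thesis by simp
  qed
  have xm: "\<bar>x - m\<bar> \<le> L" if "x \<in> {a..b}" for x using that hyps(5) unfolding m_def L_def by (auto simp: abs_le_iff field_simps)
  have bound1: "AE x in lborel. norm (indicator {a..b} x *\<^sub>R (Q n x * (x - m))) \<le> indicator {a..b} x *\<^sub>R (K * L)" for n
  proof (rule AE_I2)
    fix x show "norm (indicator {a..b} x *\<^sub>R (Q n x * (x - m))) \<le> indicator {a..b} x *\<^sub>R (K * L)"
    proof (cases "x \<in> {a..b}")
      case True
      then have "\<bar>Q n x\<bar> * \<bar>x - m\<bar> \<le> K * L" using Qb xm K0 by (intro mult_mono) auto
      with True show ?thesis by (simp add: abs_mult)
    qed simp
  qed
  have bound2: "AE x in lborel. norm (indicator {a..b} x *\<^sub>R (Q n x)\<^sup>2) \<le> indicator {a..b} x *\<^sub>R (K * K)" for n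
  proof (rule AE_I2)
    fix x show "norm (indicator {a..b} x *\<^sub>R (Q n x)\<^sup>2) \<le> indicator {a..b} x *\<^sub>R (K * K)"
    proof (cases "x \<in> {a..b}")
      case True
      then have "\<bar>Q n x\<bar> * \<bar>Q n x\<bar> \<le> K * K" using Qb K0 by (intro mult_mono) auto
      with True show ?thesis by (simp add: power2_eq_square abs_mult)
    qed simp
  qed
  have lim1: "AE x in lborel. (\<lambda>n. indicator {a..b} x *\<^sub>R (Q n x * (x - m))) \<longlonglongrightarrow> indicator {a..b} x *\<^sub>R (f' x * (x - m))"
    using AElim
  proof eventually_elim
    case (elim x)
    show ?case
    proof (cases "x \<in> {a..b}")
      case True
      with elim have "(\<lambda>n. Q n x) \<longlonglongrightarrow> f' x" by simp
      then show ?thesis by (auto intro!: tendsto_intros)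
    qed simp
  qed
  have lim2: "AE x in lborel. (\<lambda>n. indicator {a..b} x *\<^sub>R (Q n x)\<^sup>2) \<longlonglongrightarrow> indicator {a..b} x *\<^sub>R (f' x)\<^sup>2"
    using AElim
  proof eventually_elim
    case (elim x)
    show ?case
    proof (cases "x \<in> {a..b}")
      case True
      with elim have "(\<lambda>n. Q n x) \<longlonglongrightarrow> f' x" by simp
      then show ?thesis by (auto intro!: tendsto_intros)
    qed simp
  qed
  have si1: "set_integrable lborel {a..b} (\<lambda>x. f' x * (x - m))"
    unfolding set_integrable_def by (rule integrable_dominated_convergence[OF lmeas smeas wint lim1 bound1])
  have si2: "set_integrable lborel {a..b} (\<lambda>x. (f' x)\<^sup>2)"
    unfolding set_integrable_def by (rule integrable_dominated_convergence[OF lmeas2 smeas2 wint lim2 bound2])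
  have "(\<lambda>n. LINT x:{a..b}|lborel. Q n x * (x - m)) \<longlonglongrightarrow> (LINT x:{a..b}|lborel. f' x * (x - m))"
    unfolding set_lebesgue_integral_def by (rule integral_dominated_convergence[OF lmeas smeas wint lim1 bound1])
  then have "(\<lambda>n. P n b - P n a) \<longlonglongrightarrow> (LINT x:{a..b}|lborel. f' x * (x - m))"
    unfolding intQ .
  with limP have A: "(LINT x:{a..b}|lborel. f' x * (x - m)) = (g b - F b) - (g a - F a)"
    using LIMSEQ_unique by blast
  have A': "(LINT x:{a..b}|lborel. f' x * (x - m)) = L * (f a + f b) / 2"
    using A intF hyps(8) unfolding g_def m_def L_def by (simp add: field_simps)
  define S where "S = f a + f b"
  define c where "c = 6 * S / L^2"
  define A2 where "A2 = (LINT x:{a..b}|lborel. (f' x)\<^sup>2)"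
  have si3: "set_integrable lborel {a..b} (\<lambda>x. (x - m)\<^sup>2)"
    unfolding set_integrable_def by (rule borel_integrable_compact) (auto intro!: continuous_intros)
  have B: "(LINT x:{a..b}|lborel. (x - m)\<^sup>2) = L^3/12"
  proof -
    have "(LINT x:{a..b}|lborel. (x - m)\<^sup>2) = (b-m)^3/3 - (a-m)^3/3"
      by (rule lint_ftc[where F="\<lambda>x. (x-m)^3/3"])
         (use hyps(5) in \<open>auto intro!: derivative_eq_intros continuous_intros simp: power2_eq_square
             simp del: power_Suc\<close>)
    also have "\<dots> = L^3/12" unfolding m_def L_def by (simp add: field_simps power3_eq_cube)
    finally show ?thesis .
  qed
  have sa: "set_integrable lborel {a..b} (\<lambda>x. 2 * c * (f' x * (x - m)))"
    using si1 by simp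
  have sb: "set_integrable lborel {a..b} (\<lambda>x. c^2 * (x - m)\<^sup>2)"
    using si3 by simp
  have E: "(LINT x:{a..b}|lborel. (f' x)\<^sup>2 - 2 * c * (f' x * (x - m)) + c^2 * (x - m)\<^sup>2)
      = A2 - 2 * c * (L * S / 2) + c^2 * (L^3/12)"
    unfolding A2_def
    using set_integral_add(2)[OF set_integral_diff(1)[OF si2 sa] sb]
      set_integral_diff(2)[OF si2 sa] A' B unfolding S_def by simp
  have "0 \<le> (LINT x:{a..b}|lborel. (f' x)\<^sup>2 - 2 * c * (f' x * (x - m)) + c^2 * (x - m)\<^sup>2)"
    unfolding set_lebesgue_integral_def
  proof (rule integral_nonneg_AE, rule AE_I2)
    fix x
    have "(f' x)\<^sup>2 - 2 * c * (f' x * (x - m)) + c^2 * (x - m)\<^sup>2 = (f' x - c * (x - m))\<^sup>2"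
      by (simp add: power2_eq_square algebra_simps)
    then show "0 \<le> indicator {a..b} x *\<^sub>R ((f' x)\<^sup>2 - 2 * c * (f' x * (x - m)) + c^2 * (x - m)\<^sup>2)"
      by (simp add: indicator_def)
  qed
  then have E0: "0 \<le> A2 - 2 * c * (L * S / 2) + c^2 * (L^3/12)" using E by simp
  have "2 * c * (L * S / 2) - c^2 * (L^3/12) = 3 * S^2 / L"
    using L0 unfolding c_def by (simp add: field_simps power2_eq_square power3_eq_cube)
  with E0 have A2ge: "3 * S^2 / L \<le> A2" by linarith
  then have "L / 12 * (3 * S^2 / L) \<le> L / 12 * A2" using L0 by (intro mult_left_mono) auto
  moreover have "L / 12 * (3 * S^2 / L) = S^2 / 4" using L0 by (simp add: field_simps)
  moreover have "f a * f b \<le> S^2 / 4"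
    unfolding S_def using sum_squares_ge_zero[of "f a - f b" 0]
    by (simp add: power2_eq_square field_simps)
  ultimately show ?thesis unfolding A2_def L_def by linarith
qed

theorem theorem3:
  shows "(\<forall>I f f' a b. thm3_hyps I f f' a b \<longrightarrow>
            f a * f b \<le> (b - a) / 12 * (LINT x:{a..b}|lborel. (f' x)\<^sup>2))
       \<and> (\<forall>a b. a < b \<longrightarrow> (\<forall>C. C < (b - a) / 12 \<longrightarrow>
            (\<exists>I f f'. thm3_hyps I f f' a b \<and>
               \<not> (f a * f b \<le> C * (LINT x:{a..b}|lborel. (f' x)\<^sup>2)))))"
  using part1 part2 by blast

end
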